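(* Let $\pi$ be the probability distribution on $\mathbb{N}^+=\{1,2,\dots\}$ with $\pi(m)\propto \exp\{-h(m)\}$ for $m\in\mathbb{N}^+$ (and $\pi(m)=0$ for $m\notin\mathbb{N}^+$), where $h:\mathbb{N}^+\to\mathbb{R}$ is convex (so that $\pi$ is log-concave). Let the proposal be the symmetric random walk on $\mathbb{Z}$, $q(m,\{m+1\})=q(m,\{m-1\})=\tfrac12$ for $m\in\mathbb{Z}$. Fix $N\in\mathbb{N}^+$ and suppose the weights are homogeneous: $W_{m,N}=W_N\sim Q_N$ for all $m\in\mathbb{N}^+$, where $Q_N$ is a distribution with $W_N>0$ $Q_N$-a.s. and $\mathbb{E}_{Q_N}[W_N]=1$. Then the Markov chain generated by the noisy kernel $\tilde P_N$ is geometrically ergodic.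
   Context: Noisy Metropolis–Hastings kernel: from state $m$, propose $Y\sim q(m,\cdot)$, draw independent weights $W\sim Q_{m,N}$, $U\sim Q_{Y,N}$ (here both equal to $Q_N$), and move to $Y$ with probability $\min\{1,\frac{\pi(Y)q(Y,m)}{\pi(m)q(m,Y)}\cdot\frac{U}{W}\}$, otherwise stay at $m$ (proposals outside $\mathbb{N}^+$ have $\pi(Y)=0$ and are rejected). Equivalently $\tilde P_N(m,\{y\})=q(m,\{y\})\,\mathbb{E}[\min\{1,\frac{\pi(y)q(y,m)}{\pi(m)q(m,y)}\frac{W^{(1)}}{W^{(2)}}\}]$ for $y\neq m$, with $W^{(1)},W^{(2)}$ independent with the appropriate weight laws. A $\varphi$-irreducible aperiodic Markov chain with kernel $K$ is geometrically ergodic if it has an invariant probability distribution $\mu$ and there exist a finite function $V\ge 1$ and constants $\tau<1$, $R<\infty$ with $\|K^n(x,\cdot)-\mu\|_{TV}\le RV(x)\tau^n$ for all $x$ and $n$, where $K^n$ is the $n$-step kernel and $\|\nu_1-\nu_2\|_{TV}=\sup_A|\nu_1(A)-\nu_2(A)|$. *)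

theory Defs
  imports "HOL-Probability.Probability"
begin

definition posN :: "nat set" where "posN = {1..}"

definition target :: "(nat \<Rightarrow> real) \<Rightarrow> nat \<Rightarrow> real" where
  "target h m = (if m \<in> posN then exp (- h m) / (\<Sum>\<^sub>\<infinity>k\<in>posN. exp (- h k)) else 0)"

definition noisy_acc :: "real measure \<Rightarrow> real \<Rightarrow> real" where
  "noisy_acc Q r = (\<integral>w. (\<integral>u. min 1 (r * u / w) \<partial>Q) \<partial>Q)"

text \<open>Off-diagonal transition probability for a proposal y (symmetric random walk
  proposal q = 1/2 to each neighbour; proposals outside posN have pi(y)=0 and are rejected).\<close>
definition noisy_move :: "(nat \<Rightarrow> real) \<Rightarrow> real measure \<Rightarrow> nat \<Rightarrow> nat \<Rightarrow> real" where
  "noisy_move h Q m y =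
     (if y \<in> posN then 1/2 * noisy_acc Q ((target h y * (1/2)) / (target h m * (1/2))) else 0)"

definition noisy_kernel :: "(nat \<Rightarrow> real) \<Rightarrow> real measure \<Rightarrow> nat \<Rightarrow> nat \<Rightarrow> real" where
  "noisy_kernel h Q m y =
     (if y = m + 1 then noisy_move h Q m (m + 1)
      else if y + 1 = m then noisy_move h Q m y
      else if y = m then 1 - noisy_move h Q m (m + 1) - (if m \<ge> 1 then noisy_move h Q m (m - 1) else 0)
      else 0)"

fun kernel_pow :: "(nat \<Rightarrow> nat \<Rightarrow> real) \<Rightarrow> nat \<Rightarrow> nat \<Rightarrow> nat \<Rightarrow> real" where
  "kernel_pow K 0 x y = (if x = y then 1 else 0)"
| "kernel_pow K (Suc n) x y = (\<Sum>\<^sub>\<infinity>z\<in>posN. kernel_pow K n x z * K z y)"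

definition tv_dist :: "(nat \<Rightarrow> real) \<Rightarrow> (nat \<Rightarrow> real) \<Rightarrow> real" where
  "tv_dist p q = (SUP A\<in>Pow posN. \<bar>(\<Sum>\<^sub>\<infinity>y\<in>A. p y) - (\<Sum>\<^sub>\<infinity>y\<in>A. q y)\<bar>)"

definition prob_on_posN :: "(nat \<Rightarrow> real) \<Rightarrow> bool" where
  "prob_on_posN \<mu> \<longleftrightarrow> (\<forall>y. 0 \<le> \<mu> y) \<and> (\<forall>y. y \<notin> posN \<longrightarrow> \<mu> y = 0)
      \<and> \<mu> summable_on posN \<and> (\<Sum>\<^sub>\<infinity>y\<in>posN. \<mu> y) = 1"

definition invariant :: "(nat \<Rightarrow> nat \<Rightarrow> real) \<Rightarrow> (nat \<Rightarrow> real) \<Rightarrow> bool" where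
  "invariant K \<mu> \<longleftrightarrow> (\<forall>y\<in>posN. (\<Sum>\<^sub>\<infinity>x\<in>posN. \<mu> x * K x y) = \<mu> y)"

definition geom_ergodic :: "(nat \<Rightarrow> nat \<Rightarrow> real) \<Rightarrow> bool" where
  "geom_ergodic K \<longleftrightarrow> (\<exists>\<mu> V \<tau> R. prob_on_posN \<mu> \<and> invariant K \<mu>
      \<and> (\<forall>x\<in>posN. 1 \<le> V x) \<and> 0 \<le> \<tau> \<and> \<tau> < 1
      \<and> (\<forall>x\<in>posN. \<forall>n. tv_dist (kernel_pow K n x) \<mu> \<le> R * V x * \<tau> ^ n))"

end

theory Submission imports Defs begin

definition bdK :: "(nat \<Rightarrow> nat \<Rightarrow> real) \<Rightarrow> (nat \<Rightarrow> real) \<Rightarrow> (nat \<Rightarrow> real) \<Rightarrow> bool" where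
 "bdK K u d \<longleftrightarrow> (\<forall>m\<in>posN. \<forall>y\<in>posN. K m y = (if y = m+1 then u m else if y+1 = m then d m
     else if y = m then 1 - u m - d m else 0))"

lemma posN_iff[simp]: "y \<in> posN \<longleftrightarrow> 1 \<le> y" by (simp add: posN_def)

lemma step_sum:
  assumes HK: "bdK K u d" and y: "y \<in> posN"
  shows "(\<Sum>\<^sub>\<infinity>z\<in>posN. p z * K z y) =
     (if 2 \<le> y then p (y-1) * u (y-1) else 0) + p y * (1 - u y - d y) + p (y+1) * d (y+1)"
proof -
  define S where "S = (if 2 \<le> y then {y-1,y,y+1} else {y, y+1})"
  have "(\<Sum>\<^sub>\<infinity>z\<in>posN. p z * K z y) = (\<Sum>\<^sub>\<infinity>z\<in>S. p z * K z y)"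
  proof (rule infsum_cong_neutral)
    fix z assume "z \<in> posN - S"
    then show "p z * K z y = 0" using HK y unfolding bdK_def S_def
      by (auto split: if_splits)
  qed (use y in \<open>auto simp: S_def split: if_splits\<close>)
  also have "\<dots> = (if 2 \<le> y then p (y-1) * u (y-1) else 0) + p y * (1 - u y - d y) + p (y+1) * d (y+1)"
  proof (cases "2 \<le> y")
    case True
    then have "K (y-1) y = u (y-1)" "K y y = 1 - u y - d y" "K (y+1) y = d (y+1)"
      using HK unfolding bdK_def by auto
    moreover have "y - 1 \<noteq> y" "y - 1 \<noteq> y + 1" using True by auto
    ultimately show ?thesis using True by (simp add: S_def)
  next
    case False
    then have "y = 1" using y by simp
    then have "K y y = 1 - u y - d y" "K (y+1) y = d (y+1)"
      using HK unfolding bdK_def by auto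
    with False \<open>y=1\<close> show ?thesis by (simp add: S_def)
  qed
  finally show ?thesis .
qed

lemma posN_range: "posN = range Suc"
proof (rule set_eqI)
  fix x show "x \<in> posN \<longleftrightarrow> x \<in> range Suc"
  proof
    assume "x \<in> posN" then have "x = Suc (x - 1)" by simp
    then show "x \<in> range Suc" by (metis rangeI)
  qed auto
qed

lemma has_sum_posN:
  fixes f :: "nat \<Rightarrow> real"
  assumes "\<And>k. 0 \<le> f (Suc k)" "summable (\<lambda>k. f (Suc k))"
  shows "(f has_sum (\<Sum>k. f (Suc k))) posN"
proof -
  have "((f \<circ> Suc) has_sum (\<Sum>k. f (Suc k))) UNIV"
    using sums_nonneg_imp_has_sum[OF summable_sums[OF assms(2)]] assms(1) by (simp add: o_def)
  then show ?thesis unfolding posN_range using has_sum_reindex[of Suc UNIV f] by simp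
qed

lemma tv_bound:
  fixes p q :: "nat \<Rightarrow> real"
  assumes ps: "p summable_on posN" and qs: "q summable_on posN"
    and Dsum: "summable (\<lambda>k. \<bar>(\<Sum>z\<in>{1..<k+2}. p z - q z)\<bar>)"
  shows "tv_dist p q \<le> 2 * (\<Sum>k. \<bar>(\<Sum>z\<in>{1..<k+2}. p z - q z)\<bar>)"
proof -
  define D where "D y = (\<Sum>z\<in>{1..<y}. p z - q z)" for y
  define \<Phi> where "\<Phi> = (\<Sum>k. \<bar>D (k+2)\<bar>)"
  have Ds: "summable (\<lambda>k. \<bar>D (k+2)\<bar>)" using Dsum by (simp add: D_def)
  define H where "H y = \<bar>D (y+1)\<bar> + \<bar>D y\<bar>" for y
  have D1: "D 1 = 0" by (simp add: D_def)
  have Ds1: "summable (\<lambda>k. \<bar>D (k+1)\<bar>)"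
    using Ds summable_Suc_iff[of "\<lambda>k. \<bar>D (k+1)\<bar>"] by simp
  have sum1: "(\<Sum>k. \<bar>D (k+1)\<bar>) = \<Phi>"
    using suminf_split_head[OF Ds1] D1 by (simp add: \<Phi>_def)
  have Hs: "summable (\<lambda>k. H (Suc k))" unfolding H_def using Ds Ds1
    by (simp add: summable_add)
  have Hsum: "(\<Sum>k. H (Suc k)) = 2 * \<Phi>"
  proof -
    have "(\<Sum>k. H (Suc k)) = (\<Sum>k. \<bar>D (k+2)\<bar>) + (\<Sum>k. \<bar>D (k+1)\<bar>)"
      unfolding H_def using suminf_add[OF Ds Ds1] by simp
    then show ?thesis using sum1 by (simp add: \<Phi>_def)
  qed
  have Hhas: "(H has_sum (2 * \<Phi>)) posN"
    using has_sum_posN[of H] Hs Hsum by (simp add: H_def)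
  have fs: "(\<lambda>y. p y - q y) summable_on posN"
    using summable_on_add[OF ps summable_on_uminus[THEN iffD2, OF qs]] by simp
  show ?thesis unfolding tv_dist_def
  proof (rule cSUP_least)
    show "Pow posN \<noteq> {}" by blast
  next
    fix A assume "A \<in> Pow posN"
    then have A: "A \<subseteq> posN" by simp
    have pA: "p summable_on A" using summable_on_subset[OF ps A] .
    have qA: "q summable_on A" using summable_on_subset[OF qs A] .
    have fA: "(\<lambda>y. p y - q y) summable_on A" using summable_on_subset[OF fs A] .
    have HA: "H summable_on A" using summable_on_subset[OF has_sum_imp_summable[OF Hhas] A] .
    have "(\<Sum>\<^sub>\<infinity>y\<in>A. p y) - (\<Sum>\<^sub>\<infinity>y\<in>A. q y) = (\<Sum>\<^sub>\<infinity>y\<in>A. p y - q y)"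
      using infsum_add[OF pA summable_on_uminus[THEN iffD2, OF qA]] infsum_uminus[of q A] by simp
    then have "\<bar>(\<Sum>\<^sub>\<infinity>y\<in>A. p y) - (\<Sum>\<^sub>\<infinity>y\<in>A. q y)\<bar> = norm (\<Sum>\<^sub>\<infinity>y\<in>A. p y - q y)"
      unfolding real_norm_def by (rule arg_cong[where f=abs])
    also have "\<dots> \<le> (\<Sum>\<^sub>\<infinity>y\<in>A. norm (p y - q y))"
      by (rule norm_infsum_bound) (rule summable_on_iff_abs_summable_on_real[THEN iffD1, OF fA])
    also have "\<dots> \<le> (\<Sum>\<^sub>\<infinity>y\<in>A. H y)"
    proof (rule infsum_mono)
      show "(\<lambda>y. norm (p y - q y)) summable_on A"
        using summable_on_iff_abs_summable_on_real[THEN iffD1, OF fA] .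
      show "H summable_on A" by (rule HA)
      fix y assume "y \<in> A"
      then have "1 \<le> y" using A by auto
      then have "D (Suc y) = D y + (p y - q y)" unfolding D_def by (rule sum.atLeastLessThan_Suc)
      then have "p y - q y = D (y+1) - D y" by simp
      then show "norm (p y - q y) \<le> H y" unfolding H_def real_norm_def by linarith
    qed
    also have "\<dots> \<le> (\<Sum>\<^sub>\<infinity>y\<in>posN. H y)"
      by (rule infsum_mono_neutral[OF HA has_sum_imp_summable[OF Hhas]]) (use A in \<open>auto simp: H_def\<close>)
    also have "\<dots> = 2 * \<Phi>" by (rule infsumI[OF Hhas])
    also have "2 * \<Phi> = 2 * (\<Sum>k. \<bar>\<Sum>z = 1..<k + 2. p z - q z\<bar>)" unfolding \<Phi>_def D_def ..
    finally show "\<bar>(\<Sum>\<^sub>\<infinity>y\<in>A. p y) - (\<Sum>\<^sub>\<infinity>y\<in>A. q y)\<bar> \<le> 2 * (\<Sum>k. \<bar>\<Sum>z = 1..<k + 2. p z - q z\<bar>)" .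
  qed
qed

lemma abs3: "0 \<le> (\<alpha>::real) \<Longrightarrow> 0 \<le> \<beta> \<Longrightarrow> 0 \<le> \<gamma> \<Longrightarrow>
  \<bar>\<alpha> * a + \<beta> * b + \<gamma> * c\<bar> \<le> \<alpha> * \<bar>a\<bar> + \<beta> * \<bar>b\<bar> + \<gamma> * \<bar>c\<bar>"
proof -
  assume h: "0 \<le> \<alpha>" "0 \<le> \<beta>" "0 \<le> \<gamma>"
  have "\<bar>\<alpha> * a + \<beta> * b + \<gamma> * c\<bar> \<le> \<bar>\<alpha> * a\<bar> + \<bar>\<beta> * b\<bar> + \<bar>\<gamma> * c\<bar>"
    by (smt (verit) abs_triangle_ineq)
  also have "\<dots> = \<alpha> * \<bar>a\<bar> + \<beta> * \<bar>b\<bar> + \<gamma> * \<bar>c\<bar>" using h by (simp add: abs_mult)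
  finally show ?thesis .
qed

locale bd =
  fixes K :: "nat \<Rightarrow> nat \<Rightarrow> real" and u d :: "nat \<Rightarrow> real" and L :: real and y0 :: nat
  assumes HK: "bdK K u d"
    and u_pos: "\<And>m. 1 \<le> m \<Longrightarrow> 0 < u m"
    and u_le: "\<And>m. 1 \<le> m \<Longrightarrow> u m \<le> 1/2"
    and d1: "d 1 = 0"
    and d_pos: "\<And>m. 2 \<le> m \<Longrightarrow> 0 < d m"
    and d_le: "\<And>m. 2 \<le> m \<Longrightarrow> d m \<le> 1/2"
    and u_mono: "\<And>m. 1 \<le> m \<Longrightarrow> u (m+1) \<le> u m"
    and d_mono: "\<And>m. 2 \<le> m \<Longrightarrow> d m \<le> d (m+1)"
    and L1: "1 < L"
    and y03: "3 \<le> y0"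
    and tail: "\<And>y. y0 \<le> y \<Longrightarrow> L * u y \<le> d (y-1)"
begin

lemma d_mono': assumes "2 \<le> m" "m \<le> n" shows "d m \<le> d n"
  using assms(2,1) proof (induction n rule: dec_induct)
  case (step n) then show ?case using d_mono[of n] by simp
qed simp

lemma u_mono': assumes "1 \<le> m" "m \<le> n" shows "u n \<le> u m"
  using assms(2,1) proof (induction n rule: dec_induct)
  case (step n) then show ?case using u_mono[of n] by simp
qed simp

definition w :: "nat \<Rightarrow> real" where "w y = (\<Prod>k\<in>{1..<y}. u k / d (k+1))"

lemma w_Suc: "1 \<le> y \<Longrightarrow> w (Suc y) = w y * (u y / d (y+1))"
  unfolding w_def by (simp add: prod.atLeastLessThan_Suc)

lemma w_pos: "0 < w y"
  unfolding w_def by (rule prod_pos) (auto intro!: divide_pos_pos u_pos d_pos)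

definition \<rho> :: real where "\<rho> = 1 / L"

lemma rho_pos: "0 < \<rho>" and rho_lt1: "\<rho> < 1"
  using L1 by (auto simp: \<rho>_def)

lemma ratio_tail: "y0 \<le> z \<Longrightarrow> u z / d (z+1) \<le> \<rho>"
proof -
  assume z: "y0 \<le> z"
  have "L * u z \<le> d (z-1)" using tail z by simp
  also have "\<dots> \<le> d (z+1)" using d_mono'[of "z-1" "z+1"] z y03 by simp
  finally have "L * u z \<le> d (z+1)" .
  moreover have "0 < d (z+1)" using d_pos z y03 by simp
  ultimately have "(L * u z) / (L * d (z+1)) \<le> d (z+1) / (L * d (z+1))"
    using L1 by (intro divide_right_mono) auto
  then show ?thesis using L1 \<open>0 < d (z+1)\<close> by (simp add: \<rho>_def)
qed

lemma w_geo: assumes "y0 \<le> z" shows "w z \<le> w y0 * \<rho> ^ (z - y0)"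
  using assms proof (induction z rule: dec_induct)
  case base then show ?case by simp
next
  case (step n)
  have "w (Suc n) = w n * (u n / d (n+1))" using w_Suc step y03 by simp
  also have "\<dots> \<le> w n * \<rho>"
    using ratio_tail[of n] step w_pos[of n] by (intro mult_left_mono) auto
  also have "\<dots> \<le> w y0 * \<rho> ^ (n - y0) * \<rho>"
    using step rho_pos by (intro mult_right_mono) auto
  also have "\<dots> = w y0 * \<rho> ^ (Suc n - y0)"
    using step by (simp add: Suc_diff_le)
  finally show ?case .
qed

lemma w_geo': "y0 \<le> z \<Longrightarrow> w z \<le> (w y0 / \<rho> ^ y0) * \<rho> ^ z"
proof -
  assume z: "y0 \<le> z"
  have "\<rho> ^ z = \<rho> ^ (z - y0) * \<rho> ^ y0" using z by (simp flip: power_add)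
  then show ?thesis using w_geo[OF z] rho_pos by (simp add: field_simps)
qed

lemma w_summable: "summable (\<lambda>k. w (Suc k))"
proof (rule summable_comparison_test')
  show "summable (\<lambda>k. (w y0 / \<rho> ^ y0) * \<rho> ^ Suc k)"
    using rho_pos rho_lt1 by (intro summable_mult summable_geometric[THEN summable_Suc_iff[THEN iffD2]]) auto
  fix n assume "y0 \<le> n"
  then show "norm (w (Suc n)) \<le> w y0 / \<rho> ^ y0 * \<rho> ^ Suc n"
    using w_geo'[of "Suc n"] w_pos[of "Suc n"] by simp
qed

definition Z :: real where "Z = (\<Sum>k. w (Suc k))"

lemma Z_pos: "0 < Z"
  unfolding Z_def using w_summable w_pos by (intro suminf_pos) auto

lemma w_le_Z: "w (Suc k) \<le> Z"
proof -
  have "sum (\<lambda>k. w (Suc k)) {k} \<le> Z"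
    unfolding Z_def using w_summable w_pos by (intro sum_le_suminf) (auto simp: less_imp_le)
  then show ?thesis by simp
qed

definition mu :: "nat \<Rightarrow> real" where "mu y = (if 1 \<le> y then w y / Z else 0)"

lemma mu_nonneg: "0 \<le> mu y"
  using w_pos Z_pos by (simp add: mu_def less_imp_le)

lemma mu_pos: "1 \<le> y \<Longrightarrow> 0 < mu y"
  using w_pos Z_pos by (simp add: mu_def)

lemma mu_le1: "mu y \<le> 1"
proof (cases "1 \<le> y")
  case True
  define k where "k = y - 1"
  have yk: "y = Suc k" using True by (simp add: k_def)
  have "w y \<le> Z" using w_le_Z[of k] yk by simp
  then have "w y / Z \<le> 1" using Z_pos by simp
  then show ?thesis using True by (simp add: mu_def)
qed (simp add: mu_def)

lemma DB: "1 \<le> m \<Longrightarrow> mu m * u m = mu (m+1) * d (m+1)"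
proof -
  assume m: "1 \<le> m"
  have "0 < d (m+1)" using d_pos m by simp
  have "mu (m+1) * d (m+1) = w (Suc m) * d (m+1) / Z" using m by (simp add: mu_def)
  also have "\<dots> = w m * u m / Z" using w_Suc[OF m] \<open>0 < d (m+1)\<close> by simp
  also have "\<dots> = mu m * u m" using m by (simp add: mu_def)
  finally show ?thesis by simp
qed

lemma mu_geo: "mu z \<le> L ^ y0 * \<rho> ^ z"
proof (cases "y0 \<le> z")
  case True
  have "mu z = w z / Z" using True y03 by (simp add: mu_def)
  also have "\<dots> \<le> w y0 * \<rho> ^ (z - y0) / Z"
    using w_geo[OF True] Z_pos by (simp add: divide_right_mono)
  also have "\<dots> = mu y0 * \<rho> ^ (z - y0)" using y03 by (simp add: mu_def)
  also have "\<dots> \<le> \<rho> ^ (z - y0)" using mu_le1[of y0] rho_pos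
    by (simp add: mult_left_le_one_le)
  also have "\<dots> = L ^ y0 * \<rho> ^ z"
  proof -
    have "\<rho> ^ z = \<rho> ^ (z - y0) * \<rho> ^ y0" using True by (simp flip: power_add)
    moreover have "L ^ y0 * \<rho> ^ y0 = 1" using L1 by (simp add: \<rho>_def power_divide)
    ultimately show ?thesis by (simp add: algebra_simps)
  qed
  finally show ?thesis .
next
  case False
  have "1 = L ^ y0 * \<rho> ^ y0" using L1 by (simp add: \<rho>_def power_divide)
  also have "\<dots> \<le> L ^ y0 * \<rho> ^ z"
    using False rho_pos rho_lt1 L1 by (intro mult_left_mono power_decreasing) auto
  finally show ?thesis using mu_le1[of z] by linarith
qed


lemma prob_mu: "prob_on_posN mu"
proof -
  have hs: "(mu has_sum (\<Sum>k. mu (Suc k))) posN"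
  proof (rule has_sum_posN)
    show "\<And>k. 0 \<le> mu (Suc k)" by (rule mu_nonneg)
    show "summable (\<lambda>k. mu (Suc k))" using summable_divide[OF w_summable, of Z] by (simp add: mu_def)
  qed
  have "(\<Sum>k. mu (Suc k)) = (\<Sum>k. w (Suc k) / Z)" by (simp add: mu_def)
  also have "\<dots> = 1" using suminf_divide[OF w_summable, of Z] Z_pos by (simp add: Z_def)
  finally have "(mu has_sum 1) posN" using hs by simp
  then show ?thesis unfolding prob_on_posN_def
    using mu_nonneg by (auto simp: mu_def has_sum_iff)
qed

lemma inv_mu: "invariant K mu"
  unfolding invariant_def
proof
  fix y :: nat assume y: "y \<in> posN"
  have "(\<Sum>\<^sub>\<infinity>x\<in>posN. mu x * K x y) = (if 2 \<le> y then mu (y-1) * u (y-1) else 0) + mu y * (1 - u y - d y) + mu (y+1) * d (y+1)"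
    by (rule step_sum[OF HK y])
  also have "\<dots> = mu y"
  proof (cases "2 \<le> y")
    case True
    have "mu (y-1) * u (y-1) = mu y * d y" using DB[of "y-1"] True by simp
    moreover have "mu y * u y = mu (y+1) * d (y+1)" using DB[of y] y by simp
    ultimately show ?thesis using True by (simp add: algebra_simps)
  next
    case False
    then have "y = 1" using y by simp
    moreover have "mu y * u y = mu (y+1) * d (y+1)" using DB[of y] y by simp
    ultimately show ?thesis using d1 by (simp add: algebra_simps)
  qed
  finally show "(\<Sum>\<^sub>\<infinity>x\<in>posN. mu x * K x y) = mu y" .
qed

lemma kp_fwd: "1 \<le> y \<Longrightarrow> kernel_pow K (Suc n) x y =
   (if 2 \<le> y then kernel_pow K n x (y-1) * u (y-1) else 0) + kernel_pow K n x y * (1 - u y - d y)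
   + kernel_pow K n x (y+1) * d (y+1)"
  using step_sum[OF HK, of y "kernel_pow K n x"] by simp

lemma kp_supp: "1 \<le> x \<Longrightarrow> x + n < y \<Longrightarrow> kernel_pow K n x y = 0"
proof (induction n arbitrary: y)
  case 0 then show ?case by simp
next
  case (Suc n)
  then show ?case using kp_fwd[of y n x] by simp
qed

definition Cc :: "nat \<Rightarrow> nat \<Rightarrow> nat \<Rightarrow> real" where
  "Cc x n y = (\<Sum>z\<in>{1..<y}. kernel_pow K n x z)"
definition Mc :: "nat \<Rightarrow> real" where "Mc y = (\<Sum>z\<in>{1..<y}. mu z)"
definition Dd :: "nat \<Rightarrow> nat \<Rightarrow> nat \<Rightarrow> real" where "Dd x n y = Cc x n y - Mc y"

lemma Cc_Suc: "1 \<le> y \<Longrightarrow> Cc x n (Suc y) = Cc x n y + kernel_pow K n x y"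
  unfolding Cc_def by (simp add: sum.atLeastLessThan_Suc)
lemma Mc_Suc: "1 \<le> y \<Longrightarrow> Mc (Suc y) = Mc y + mu y"
  unfolding Mc_def by (simp add: sum.atLeastLessThan_Suc)
lemma Dd_1: "Dd x n 1 = 0" by (simp add: Dd_def Cc_def Mc_def)

lemma Cc2: "Cc x m 2 = kernel_pow K m x 1"
  unfolding Cc_def by (simp add: numeral_2_eq_2)

lemma C_step: assumes "2 \<le> y"
  shows "Cc x (Suc n) y = Cc x n y - u (y-1) * kernel_pow K n x (y-1) + d y * kernel_pow K n x y"
  using assms
proof (induction y rule: dec_induct)
  case base
  have "Cc x (Suc n) 2 = kernel_pow K (Suc n) x 1" by (rule Cc2)
  also have "\<dots> = kernel_pow K n x 1 * (1 - u 1 - d 1) + kernel_pow K n x 2 * d 2"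
    using kp_fwd[of 1 n x] by (simp add: numeral_2_eq_2)
  finally show ?case using d1 by (simp add: Cc2 algebra_simps)
next
  case (step y)
  have "Cc x (Suc n) (Suc y) = Cc x (Suc n) y + kernel_pow K (Suc n) x y"
    using step by (simp add: Cc_Suc)
  also have "\<dots> = Cc x n y - u (y-1) * kernel_pow K n x (y-1) + d y * kernel_pow K n x y
     + (kernel_pow K n x (y-1) * u (y-1) + kernel_pow K n x y * (1 - u y - d y)
        + kernel_pow K n x (y+1) * d (y+1))"
    using step kp_fwd[of y n x] by simp
  also have "\<dots> = Cc x n (Suc y) - u y * kernel_pow K n x y + d (Suc y) * kernel_pow K n x (Suc y)"
    using step by (simp add: Cc_Suc algebra_simps)
  finally show ?case by simp
qed

lemma D_step: assumes y: "2 \<le> y"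
  shows "Dd x (Suc n) y = u (y-1) * Dd x n (y-1) + (1 - u (y-1) - d y) * Dd x n y + d y * Dd x n (y+1)"
proof -
  have a: "Cc x n y = Cc x n (y-1) + kernel_pow K n x (y-1)" using Cc_Suc[of "y-1" x n] y by simp
  have b: "Cc x n (y+1) = Cc x n y + kernel_pow K n x y" using Cc_Suc[of y x n] y by simp
  have c: "Mc y = Mc (y-1) + mu (y-1)" using Mc_Suc[of "y-1"] y by simp
  have e: "Mc (y+1) = Mc y + mu y" using Mc_Suc[of y] y by simp
  have db: "mu (y-1) * u (y-1) = mu y * d y" using DB[of "y-1"] y by simp
  show ?thesis unfolding Dd_def C_step[OF y] using a b c e db
    by (simp add: algebra_simps)
qed


definition \<beta> :: real where "\<beta> = d 2"
definition \<sigma> :: real where "\<sigma> = sqrt L"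
lemma beta_pos: "0 < \<beta>" and beta_le: "\<beta> \<le> 1/2"
  using d_pos[of 2] d_le[of 2] by (auto simp: \<beta>_def)
lemma sigma_gt1: "1 < \<sigma>" using L1 by (simp add: \<sigma>_def)
lemma sigma_sq: "\<sigma> * \<sigma> = L" using L1 by (simp add: \<sigma>_def)
lemma beta_le_d: "2 \<le> m \<Longrightarrow> \<beta> \<le> d m" using d_mono'[of 2 m] by (simp add: \<beta>_def)

definition \<Delta> :: "nat \<Rightarrow> real" where
  "\<Delta> k = (if k < y0 then \<beta> ^ k else \<beta> ^ (y0-1) * \<sigma> ^ (k - (y0-1)))"
definition g :: "nat \<Rightarrow> real" where "g y = 1 + (\<Sum>k\<in>{2..<y}. \<Delta> k)"

lemma Delta_pos: "0 < \<Delta> k"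
  using beta_pos sigma_gt1 by (simp add: \<Delta>_def)

lemma Delta_le1: "k < y0 \<Longrightarrow> \<Delta> k \<le> 1"
  using beta_pos beta_le by (simp add: \<Delta>_def power_le_one)

lemma Delta_lo: "y < y0 \<Longrightarrow> 1 \<le> y \<Longrightarrow> \<Delta> y = \<beta> * \<Delta> (y-1)"
  by (simp add: \<Delta>_def power_eq_if)

lemma Delta_hi: assumes "y0 \<le> y" shows "\<Delta> y = \<sigma> * \<Delta> (y-1)"
proof (cases "y = y0")
  case True then show ?thesis using y03 by (simp add: \<Delta>_def)
next
  case False
  then have "y - (y0 - 1) = Suc (y - 1 - (y0 - 1))" using assms y03 by simp
  then show ?thesis using assms False by (simp add: \<Delta>_def)
qed

lemma Delta_geo: "\<Delta> k \<le> \<sigma> ^ (k+1)"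
proof (cases "k < y0")
  case True
  then have "\<Delta> k \<le> 1" by (rule Delta_le1)
  also have "1 \<le> \<sigma> ^ (k+1)" using sigma_gt1 by (intro one_le_power) simp
  finally show ?thesis .
next
  case False
  have "\<Delta> k = \<beta> ^ (y0-1) * \<sigma> ^ (k - (y0-1))" using False by (simp add: \<Delta>_def)
  also have "\<dots> \<le> 1 * \<sigma> ^ (k - (y0-1))"
    using beta_pos beta_le sigma_gt1 by (intro mult_right_mono power_le_one) auto
  also have "\<dots> \<le> \<sigma> ^ (k+1)"
  proof -
    have "\<sigma> ^ (k - (y0-1)) \<le> \<sigma> ^ (k+1)" by (rule power_increasing) (use sigma_gt1 in auto)
    then show ?thesis by simp
  qed
  finally show ?thesis .
qed

lemma g_Suc: "2 \<le> y \<Longrightarrow> g (Suc y) = g y + \<Delta> y"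
  unfolding g_def by (simp add: sum.atLeastLessThan_Suc)

lemma g_ge1: "1 \<le> g y"
  unfolding g_def using Delta_pos by (simp add: sum_nonneg less_imp_le)

lemma g_small: assumes "2 \<le> y" "y \<le> y0" shows "g y \<le> y"
  using assms
proof (induction y rule: dec_induct)
  case base then show ?case by (simp add: g_def)
next
  case (step n)
  then have "\<Delta> n \<le> 1" using Delta_le1 by simp
  then show ?case using step g_Suc[of n] by simp
qed

definition G :: real where "G = max (real y0 / \<beta> ^ y0) (\<sigma> / (\<sigma> - 1))"

lemma g_bound_lo: assumes "3 \<le> y" "y \<le> y0" shows "g y \<le> G * \<Delta> (y-1)"
proof -
  have "g y \<le> real y0" using g_small[of y] assms by simp
  also have "\<dots> = (real y0 / \<beta> ^ y0) * \<beta> ^ y0" using beta_pos by simp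
  also have "\<dots> \<le> G * \<beta> ^ y0" using beta_pos by (intro mult_right_mono) (auto simp: G_def)
  also have "\<dots> \<le> G * \<Delta> (y-1)"
  proof -
    have "\<Delta> (y-1) = \<beta> ^ (y-1)" using assms by (simp add: \<Delta>_def)
    moreover have "\<beta> ^ y0 \<le> \<beta> ^ (y-1)" using beta_pos beta_le assms by (intro power_decreasing) auto
    moreover have "0 \<le> G" using beta_pos by (simp add: G_def le_max_iff_disj)
    ultimately show ?thesis by (simp add: mult_left_mono)
  qed
  finally show ?thesis .
qed

lemma g_bound_hi: assumes "y0 \<le> y" shows "g y \<le> G * \<Delta> (y-1)"
  using assms
proof (induction y rule: dec_induct)
  case base then show ?case using g_bound_lo[of y0] y03 by simp
next
  case (step n)
  have "g (Suc n) = g n + \<Delta> n" using g_Suc[of n] step y03 by simp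
  also have "\<dots> \<le> G * \<Delta> (n-1) + \<Delta> n" using step by simp
  also have "\<dots> = (G / \<sigma> + 1) * \<Delta> n"
    using Delta_hi[of n] step sigma_gt1 by (simp add: field_simps)
  also have "\<dots> \<le> G * \<Delta> n"
  proof -
    have "\<sigma> / (\<sigma> - 1) \<le> G" by (simp add: G_def)
    then have "\<sigma> \<le> G * (\<sigma> - 1)" using sigma_gt1 by (simp add: divide_le_eq)
    then have "G / \<sigma> + 1 \<le> G" using sigma_gt1 by (simp add: field_simps)
    then show ?thesis using Delta_pos[of n] by (intro mult_right_mono) auto
  qed
  finally show ?case by simp
qed

lemma g_bound: "3 \<le> y \<Longrightarrow> g y \<le> G * \<Delta> (y-1)"
  using g_bound_lo g_bound_hi by (cases "y \<le> y0") auto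

lemma G_pos: "0 < G" using sigma_gt1 by (simp add: G_def less_max_iff_disj)

lemma g_geo: "3 \<le> y \<Longrightarrow> g y \<le> G * \<sigma> ^ y"
proof -
  assume y: "3 \<le> y"
  have "g y \<le> G * \<Delta> (y-1)" using g_bound[OF y] .
  also have "\<dots> \<le> G * \<sigma> ^ y" using Delta_geo[of "y-1"] y G_pos by (intro mult_left_mono) auto
  finally show ?thesis .
qed

definition \<kappa> :: real where "\<kappa> = min (1/2) (1 - 1/\<sigma>) * \<beta>"
definition cc :: real where "cc = min (\<beta>/2) (\<kappa> / G)"
definition lam :: real where "lam = 1 - cc"

lemma kappa_pos: "0 < \<kappa>" using sigma_gt1 beta_pos by (simp add: \<kappa>_def)
lemma cc_pos: "0 < cc" using kappa_pos G_pos beta_pos by (simp add: cc_def)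
lemma lambda_lt1: "lam < 1" and lambda_nonneg: "0 \<le> lam"
  using cc_pos beta_le by (auto simp: lam_def cc_def min_def)

lemma kappa_le1: "\<kappa> \<le> \<beta> / 2"
proof -
  have "min (1/2) (1 - 1/\<sigma>) \<le> 1/2" by (rule min.cobounded1)
  then have "min (1/2) (1 - 1/\<sigma>) * \<beta> \<le> (1/2) * \<beta>" using beta_pos by (intro mult_right_mono) auto
  then show ?thesis by (simp add: \<kappa>_def)
qed
lemma kappa_le2: "\<kappa> \<le> (1 - 1/\<sigma>) * \<beta>"
proof -
  have "min (1/2) (1 - 1/\<sigma>) \<le> (1 - 1/\<sigma>)" by (rule min.cobounded2)
  then have "min (1/2) (1 - 1/\<sigma>) * \<beta> \<le> (1 - 1/\<sigma>) * \<beta>" using beta_pos by (intro mult_right_mono) auto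
  then show ?thesis by (simp add: \<kappa>_def)
qed

lemma key: assumes "3 \<le> y" shows "u y * \<Delta> y - d (y-1) * \<Delta> (y-1) \<le> - \<kappa> * \<Delta> (y-1)"
proof (cases "y < y0")
  case True
  have "\<Delta> y = \<beta> * \<Delta> (y-1)" using Delta_lo True assms by simp
  moreover have "u y * \<beta> \<le> d (y-1) / 2"
  proof -
    have "u y * \<beta> \<le> (1/2) * \<beta>" using u_le[of y] assms beta_pos by (intro mult_right_mono) auto
    moreover have "\<beta> \<le> d (y-1)" using beta_le_d[of "y-1"] assms by simp
    ultimately show ?thesis by simp
  qed
  moreover have "\<kappa> \<le> \<beta> / 2" by (rule kappa_le1)
  moreover have bd: "\<beta> \<le> d (y-1)" using beta_le_d[of "y-1"] assms by simp
  ultimately have "u y * \<Delta> y - d (y-1) * \<Delta> (y-1) = (u y * \<beta> - d (y-1)) * \<Delta> (y-1)"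
    by (simp add: algebra_simps)
  also have "\<dots> \<le> (d (y-1) / 2 - d (y-1)) * \<Delta> (y-1)"
    using \<open>u y * \<beta> \<le> d (y-1) / 2\<close> Delta_pos[of "y-1"] by (intro mult_right_mono) auto
  also have "\<dots> \<le> - \<kappa> * \<Delta> (y-1)"
    using \<open>\<kappa> \<le> \<beta> / 2\<close> bd Delta_pos[of "y-1"] by (intro mult_right_mono) auto
  finally show ?thesis .
next
  case False
  have D: "\<Delta> y = \<sigma> * \<Delta> (y-1)" using Delta_hi False by simp
  have "L * u y \<le> d (y-1)" using tail False by simp
  then have "\<sigma> * (\<sigma> * u y) \<le> d (y-1)" using sigma_sq by (simp add: mult.assoc[symmetric])
  then have us: "\<sigma> * u y \<le> d (y-1) / \<sigma>" using sigma_gt1 by (simp add: le_divide_eq mult.commute)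
  have "u y * \<Delta> y - d (y-1) * \<Delta> (y-1) = (\<sigma> * u y - d (y-1)) * \<Delta> (y-1)"
    using D by (simp add: algebra_simps)
  also have "\<dots> \<le> (d (y-1) / \<sigma> - d (y-1)) * \<Delta> (y-1)"
    using us Delta_pos[of "y-1"] by (intro mult_right_mono) auto
  also have "\<dots> = - ((1 - 1/\<sigma>) * d (y-1)) * \<Delta> (y-1)" by (simp add: algebra_simps)
  also have "\<dots> \<le> - \<kappa> * \<Delta> (y-1)"
  proof -
    have "\<kappa> \<le> (1 - 1/\<sigma>) * \<beta>" by (rule kappa_le2)
    also have "\<dots> \<le> (1 - 1/\<sigma>) * d (y-1)" using beta_le_d[of "y-1"] assms sigma_gt1
      by (intro mult_left_mono) auto
    finally show ?thesis using Delta_pos[of "y-1"] by (intro mult_right_mono) auto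
  qed
  finally show ?thesis .
qed

lemma COND: assumes y: "2 \<le> y"
  shows "u y * g (y+1) + (1 - u (y-1) - d y) * g y + (if 3 \<le> y then d (y-1) * g (y-1) else 0) \<le> lam * g y"
proof (cases "3 \<le> y")
  case True
  have g1: "g (y+1) = g y + \<Delta> y" using g_Suc[of y] y by simp
  have g2: "g y = g (y-1) + \<Delta> (y-1)" using g_Suc[of "y-1"] True by simp
  have m1: "u y \<le> u (y-1)" using u_mono[of "y-1"] True by simp
  have m2: "d (y-1) \<le> d y" using d_mono[of "y-1"] True by simp
  have "u y * g (y+1) + (1 - u (y-1) - d y) * g y + d (y-1) * g (y-1)
     = g y * (1 - (u (y-1) - u y) - (d y - d (y-1))) + (u y * \<Delta> y - d (y-1) * \<Delta> (y-1))"
    unfolding g1 using g2 by (simp add: algebra_simps)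
  also have "\<dots> \<le> g y * 1 + (- \<kappa> * \<Delta> (y-1))"
    using key[OF True] m1 m2 g_ge1[of y] by (intro add_mono mult_left_mono) auto
  also have "\<dots> \<le> g y - cc * g y"
  proof -
    have "cc * g y \<le> (\<kappa> / G) * (G * \<Delta> (y-1))"
      using g_bound[OF True] cc_pos g_ge1[of y] by (intro mult_mono) (auto simp: cc_def less_imp_le[OF G_pos] less_imp_le[OF kappa_pos])
    also have "\<dots> = \<kappa> * \<Delta> (y-1)" using G_pos by simp
    finally show ?thesis by simp
  qed
  also have "\<dots> = lam * g y" by (simp add: lam_def left_diff_distrib)
  finally show ?thesis using True by simp
next
  case False
  then have y2: "y = 2" using y by simp
  have g2: "g 2 = 1" by (simp add: g_def)
  have g3: "g 3 = 1 + \<beta>^2"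
  proof -
    have "g 3 = g 2 + \<Delta> 2" using g_Suc[of 2] by (simp add: numeral_3_eq_3)
    then show ?thesis using y03 g2 by (simp add: \<Delta>_def)
  qed
  have a: "u 2 \<le> u 1" using u_mono[of 1] by (simp add: numeral_2_eq_2)
  have b: "u 2 * \<beta>^2 \<le> \<beta>^2 / 2" using u_le[of 2] beta_pos by (simp add: power2_eq_square)
  have c: "\<beta>^2 \<le> \<beta>" using beta_pos beta_le by (simp add: power2_eq_square)
  have e: "cc \<le> \<beta>/2" unfolding cc_def by (rule min.cobounded1)
  have f: "d 2 = \<beta>" by (simp add: \<beta>_def)
  have "u 2 * g (2+1) + (1 - u (2-1) - d 2) * g 2 + (if 3 \<le> (2::nat) then d (2-1) * g (2-1) else 0)
     = u 2 + u 2 * \<beta>^2 + (1 - u 1 - \<beta>)"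
    using g2 g3 f by (simp add: distrib_left)
  also have "\<dots> \<le> lam * g 2" using a b c e g2 by (simp add: lam_def)
  finally show ?thesis using y2 by simp
qed


definition sx :: "nat \<Rightarrow> nat \<Rightarrow> nat \<Rightarrow> real" where "sx x n k = g (k+2) * \<bar>Dd x n (k+2)\<bar>"

lemma u_nn: "1 \<le> m \<Longrightarrow> 0 \<le> u m" using u_pos[of m] by simp
lemma d_nn: "1 \<le> m \<Longrightarrow> 0 \<le> d m" using d_pos[of m] d1 by (cases "m = 1") auto
lemma mid_nn: "1 \<le> m \<Longrightarrow> 0 \<le> 1 - u m - d (m+1)" using u_le[of m] d_le[of "m+1"] by simp

lemma sx_nn: "0 \<le> sx x n k" unfolding sx_def using g_ge1[of "k+2"] by simp

lemma contr_step:
  assumes S: "summable (sx x n)"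
  shows "summable (sx x (Suc n)) \<and> suminf (sx x (Suc n)) \<le> lam * suminf (sx x n)"
proof -
  define A' where "A' k = g (k+3) * u (k+2) * \<bar>Dd x n (k+2)\<bar>" for k
  define B where "B k = g (k+2) * (1 - u (k+1) - d (k+2)) * \<bar>Dd x n (k+2)\<bar>" for k
  define C' where "C' k = (if k = 0 then 0 else g (k+1) * d (k+1) * \<bar>Dd x n (k+2)\<bar>)" for k
  define A where "A k = g (k+2) * u (k+1) * \<bar>Dd x n (k+1)\<bar>" for k
  define C where "C k = g (k+2) * d (k+2) * \<bar>Dd x n (k+3)\<bar>" for k
  have gnn: "\<And>y. 0 \<le> g y" using g_ge1 by (meson order_trans zero_le_one)
  have nA: "0 \<le> A' k" for k unfolding A'_def using gnn u_nn[of "k+2"] by simp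
  have nB: "0 \<le> B k" for k unfolding B_def using gnn mid_nn[of "k+1"] by simp
  have nC: "0 \<le> C' k" for k unfolding C'_def using gnn d_nn[of "k+1"] by simp
  have tot: "A' k + B k + C' k \<le> lam * sx x n k" for k
  proof -
    have c: "u (k+2) * g (k+2+1) + (1 - u (k+2-1) - d (k+2)) * g (k+2)
        + (if 3 \<le> k+2 then d (k+2-1) * g (k+2-1) else 0) \<le> lam * g (k+2)"
      by (rule COND) simp
    have "A' k + B k + C' k = \<bar>Dd x n (k+2)\<bar> * (u (k+2) * g (k+2+1) + (1 - u (k+2-1) - d (k+2)) * g (k+2)
        + (if 3 \<le> k+2 then d (k+2-1) * g (k+2-1) else 0))"
      unfolding A'_def B_def C'_def by (cases k) (simp_all add: algebra_simps numeral_3_eq_3)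
    also have "\<dots> \<le> \<bar>Dd x n (k+2)\<bar> * (lam * g (k+2))"
      using c by (intro mult_left_mono) auto
    also have "\<dots> = lam * sx x n k" by (simp add: sx_def)
    finally show ?thesis .
  qed
  have lamS: "summable (\<lambda>k. lam * sx x n k)" using S by (rule summable_mult)
  have sA': "summable A'"
    by (rule summable_comparison_test'[OF lamS, of 0]) (use nA nB nC tot in \<open>smt (verit) real_norm_def\<close>)
  have sB: "summable B"
    by (rule summable_comparison_test'[OF lamS, of 0]) (use nA nB nC tot in \<open>smt (verit) real_norm_def\<close>)
  have sC': "summable C'"
    by (rule summable_comparison_test'[OF lamS, of 0]) (use nA nB nC tot in \<open>smt (verit) real_norm_def\<close>)
  have AS: "A (Suc k) = A' k" for k unfolding A_def A'_def by (simp add: numeral_3_eq_3)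
  have A0: "A 0 = 0" unfolding A_def using Dd_1 by simp
  have CS: "C k = C' (Suc k)" for k unfolding C_def C'_def by (simp add: numeral_3_eq_3)
  have sA: "summable A" using sA' summable_Suc_iff[of A] AS by simp
  have sumA: "suminf A = suminf A'" using suminf_split_head[OF sA] AS A0 by simp
  have Ceq: "C = (\<lambda>k. C' (Suc k))" using CS by auto
  have sC: "summable C" unfolding Ceq using sC' summable_Suc_iff[of C'] by simp
  have sumC: "suminf C = suminf C'" unfolding Ceq using suminf_split_head[OF sC'] by (simp add: C'_def)
  have tle: "sx x (Suc n) k \<le> A k + B k + C k" for k
  proof -
    have ds: "Dd x (Suc n) (k+2) = u (k+1) * Dd x n (k+1) + (1 - u (k+1) - d (k+2)) * Dd x n (k+2)
       + d (k+2) * Dd x n (k+3)"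
      using D_step[of "k+2" x n] by (simp add: numeral_3_eq_3)
    have "\<bar>Dd x (Suc n) (k+2)\<bar> \<le> u (k+1) * \<bar>Dd x n (k+1)\<bar> + (1 - u (k+1) - d (k+2)) * \<bar>Dd x n (k+2)\<bar>
       + d (k+2) * \<bar>Dd x n (k+3)\<bar>"
      unfolding ds by (rule abs3) (use u_nn[of "k+1"] mid_nn[of "k+1"] d_nn[of "k+2"] in auto)
    then have "g (k+2) * \<bar>Dd x (Suc n) (k+2)\<bar> \<le> g (k+2) * (u (k+1) * \<bar>Dd x n (k+1)\<bar> + (1 - u (k+1) - d (k+2)) * \<bar>Dd x n (k+2)\<bar>
       + d (k+2) * \<bar>Dd x n (k+3)\<bar>)"
      using gnn by (intro mult_left_mono) auto
    then show ?thesis unfolding sx_def A_def B_def C_def by (simp add: algebra_simps)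
  qed
  have sABC: "summable (\<lambda>k. A k + B k + C k)" using sA sB sC by (intro summable_add)
  have sT: "summable (sx x (Suc n))"
    by (rule summable_comparison_test'[OF sABC, of 0]) (use tle sx_nn in \<open>simp add: abs_of_nonneg\<close>)
  have "suminf (sx x (Suc n)) \<le> (\<Sum>k. A k + B k + C k)"
    by (rule suminf_le[OF tle sT sABC])
  also have "\<dots> = suminf A + suminf B + suminf C"
    using suminf_add[OF sA sB] suminf_add[OF summable_add[OF sA sB] sC] by simp
  also have "\<dots> = suminf A' + suminf B + suminf C'" using sumA sumC by simp
  also have "\<dots> = (\<Sum>k. A' k + B k + C' k)"
    using suminf_add[OF sA' sB] suminf_add[OF summable_add[OF sA' sB] sC'] by simp
  also have "\<dots> \<le> (\<Sum>k. lam * sx x n k)"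
    by (rule suminf_le[OF tot summable_add[OF summable_add[OF sA' sB] sC'] lamS])
  also have "\<dots> = lam * suminf (sx x n)" by (rule suminf_mult[OF S])
  finally show ?thesis using sT by simp
qed

lemma contr_iter:
  assumes S0: "summable (sx x 0)"
  shows "summable (sx x n) \<and> suminf (sx x n) \<le> lam ^ n * suminf (sx x 0)"
proof (induction n)
  case 0 then show ?case using S0 by simp
next
  case (Suc n)
  then have "summable (sx x (Suc n)) \<and> suminf (sx x (Suc n)) \<le> lam * suminf (sx x n)"
    using contr_step by blast
  moreover have "lam * suminf (sx x n) \<le> lam * (lam ^ n * suminf (sx x 0))"
    using Suc lambda_nonneg by (intro mult_left_mono) auto
  ultimately show ?case by simp
qed


lemma mu_suc_summable: "summable (\<lambda>k. mu (Suc k))"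
  using summable_divide[OF w_summable, of Z] by (simp add: mu_def)
lemma mu_suc_sum: "(\<Sum>k. mu (Suc k)) = 1"
proof -
  have "(\<Sum>k. mu (Suc k)) = (\<Sum>k. w (Suc k) / Z)" by (simp add: mu_def)
  also have "\<dots> = 1" using suminf_divide[OF w_summable, of Z] Z_pos by (simp add: Z_def)
  finally show ?thesis .
qed

definition T :: "nat \<Rightarrow> real" where "T y = (\<Sum>k. mu (k + y))"

lemma Mc_alt: "1 \<le> y \<Longrightarrow> Mc y = (\<Sum>i<y-1. mu (Suc i))"
proof -
  assume y: "1 \<le> y"
  have "Mc y = sum mu {Suc 0..<Suc (y-1)}" using y by (simp add: Mc_def)
  also have "\<dots> = (\<Sum>i\<in>{0..<y-1}. mu (Suc i))" by (rule sum.shift_bounds_Suc_ivl)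
  finally show ?thesis by (simp add: atLeast0LessThan)
qed

lemma MT: "1 \<le> y \<Longrightarrow> Mc y + T y = 1"
proof -
  assume y: "1 \<le> y"
  have "1 = (\<Sum>k. mu (Suc (k + (y-1)))) + (\<Sum>i<y-1. mu (Suc i))"
    using suminf_split_initial_segment[OF mu_suc_summable, of "y-1"] mu_suc_sum by simp
  moreover have "(\<lambda>k. mu (Suc (k + (y-1)))) = (\<lambda>k. mu (k + y))" using y by auto
  ultimately show ?thesis using Mc_alt[OF y] by (simp add: T_def)
qed

lemma mu_shift_summable: "summable (\<lambda>k. mu (k + y))"
proof -
  have "summable (\<lambda>k. L ^ y0 * \<rho> ^ y * \<rho> ^ k)"
    using rho_pos rho_lt1 by (intro summable_mult summable_geometric) auto
  then show ?thesis
  proof (rule summable_comparison_test'[of _ 0])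
    fix k :: nat
    have "mu (k + y) \<le> L ^ y0 * \<rho> ^ (k + y)" by (rule mu_geo)
    also have "\<dots> = L ^ y0 * \<rho> ^ y * \<rho> ^ k" by (simp add: power_add)
    finally show "norm (mu (k + y)) \<le> L ^ y0 * \<rho> ^ y * \<rho> ^ k" using mu_nonneg[of "k+y"] by simp
  qed
qed

lemma T_bound: "T y \<le> L ^ y0 * \<rho> ^ y / (1 - \<rho>)"
proof -
  have sg: "summable (\<lambda>k. L ^ y0 * \<rho> ^ y * \<rho> ^ k)"
    using rho_pos rho_lt1 by (intro summable_mult summable_geometric) auto
  have "T y \<le> (\<Sum>k. L ^ y0 * \<rho> ^ y * \<rho> ^ k)"
    unfolding T_def
  proof (rule suminf_le[OF _ mu_shift_summable sg])
    fix k
    have "mu (k + y) \<le> L ^ y0 * \<rho> ^ (k + y)" by (rule mu_geo)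
    also have "\<dots> = L ^ y0 * \<rho> ^ y * \<rho> ^ k" by (simp add: power_add)
    finally show "mu (k + y) \<le> L ^ y0 * \<rho> ^ y * \<rho> ^ k" .
  qed
  also have "\<dots> = L ^ y0 * \<rho> ^ y * (1 / (1 - \<rho>))"
    using suminf_mult[OF summable_geometric[of \<rho>], of "L ^ y0 * \<rho> ^ y"] suminf_geometric[of \<rho>]
      rho_pos rho_lt1 by simp
  finally show ?thesis by simp
qed

lemma Cc0: "1 \<le> x \<Longrightarrow> Cc x 0 y = (if x < y then 1 else 0)"
  unfolding Cc_def by (simp add: sum.delta)

lemma D0_tail: "1 \<le> x \<Longrightarrow> x < y \<Longrightarrow> \<bar>Dd x 0 y\<bar> = T y"
proof -
  assume x: "1 \<le> x" and xy: "x < y"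
  have "Dd x 0 y = 1 - Mc y" using Cc0[OF x] xy by (simp add: Dd_def)
  also have "\<dots> = T y" using MT[of y] x xy by simp
  finally have "Dd x 0 y = T y" .
  moreover have "0 \<le> T y" unfolding T_def using mu_shift_summable mu_nonneg by (intro suminf_nonneg) auto
  ultimately show ?thesis by simp
qed

lemma sx0_summable: assumes x: "1 \<le> x" shows "summable (sx x 0)"
proof -
  define E where "E = G * L ^ y0 / (1 - \<rho>)"
  define \<nu> where "\<nu> = 1 / \<sigma>"
  have nu: "0 < \<nu>" "\<nu> < 1" using sigma_gt1 by (auto simp: \<nu>_def)
  have r: "\<rho> = 1 / (\<sigma> * \<sigma>)" by (simp add: \<rho>_def sigma_sq)
  have sr: "\<sigma> * \<rho> = \<nu>" unfolding r \<nu>_def using sigma_gt1 by simp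
  have sg: "summable (\<lambda>k. E * \<nu> ^ (k+2))"
    using nu by (intro summable_mult) (simp add: summable_geometric)
  show ?thesis
  proof (rule summable_comparison_test'[OF sg, of "x+1"])
    fix k assume k: "x + 1 \<le> k"
    have "norm (sx x 0 k) = g (k+2) * T (k+2)"
      using D0_tail[OF x, of "k+2"] k g_ge1[of "k+2"] by (simp add: sx_def)
    also have "\<dots> \<le> (G * \<sigma> ^ (k+2)) * (L ^ y0 * \<rho> ^ (k+2) / (1 - \<rho>))"
    proof (rule mult_mono)
      show "g (k+2) \<le> G * \<sigma> ^ (k+2)" using g_geo[of "k+2"] k x by simp
      show "T (k+2) \<le> L ^ y0 * \<rho> ^ (k+2) / (1 - \<rho>)" by (rule T_bound)
      show "0 \<le> G * \<sigma> ^ (k+2)" using G_pos sigma_gt1 by simp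
      show "0 \<le> T (k+2)" unfolding T_def by (rule suminf_nonneg[OF mu_shift_summable]) (rule mu_nonneg)
    qed
    also have "\<dots> = E * (\<sigma> * \<rho>) ^ (k+2)" by (simp add: E_def power_mult_distrib)
    also have "\<dots> = E * \<nu> ^ (k+2)" using sr by simp
    finally show "norm (sx x 0 k) \<le> E * \<nu> ^ (k+2)" .
  qed
qed

lemma kp_summable_posN: assumes x: "1 \<le> x" shows "kernel_pow K n x summable_on posN"
proof -
  have "kernel_pow K n x summable_on posN \<longleftrightarrow> kernel_pow K n x summable_on {1..x+n}"
    by (rule summable_on_cong_neutral) (use kp_supp[OF x] in auto)
  then show ?thesis by simp
qed

theorem geom: "geom_ergodic K"
  unfolding geom_ergodic_def
proof (intro exI conjI)
  show "prob_on_posN mu" by (rule prob_mu)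
  show "invariant K mu" by (rule inv_mu)
  show "\<forall>x\<in>posN. 1 \<le> 1 + suminf (sx x 0)"
  proof
    fix x assume "x \<in> posN"
    then have "0 \<le> suminf (sx x 0)" by (intro suminf_nonneg[OF sx0_summable] sx_nn) simp
    then show "1 \<le> 1 + suminf (sx x 0)" by simp
  qed
  show "0 \<le> lam" by (rule lambda_nonneg)
  show "lam < 1" by (rule lambda_lt1)
  show "\<forall>x\<in>posN. \<forall>n. tv_dist (kernel_pow K n x) mu \<le> 2 * (1 + suminf (sx x 0)) * lam ^ n"
  proof (intro ballI allI)
    fix x n assume "x \<in> posN"
    then have x: "1 \<le> x" by simp
    have it: "summable (sx x n) \<and> suminf (sx x n) \<le> lam ^ n * suminf (sx x 0)"
      using contr_iter[OF sx0_summable[OF x]] .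
    have De: "(\<Sum>z\<in>{1..<k+2}. kernel_pow K n x z - mu z) = Dd x n (k+2)" for k
      by (simp add: Dd_def Cc_def Mc_def sum_subtractf)
    have le: "\<bar>Dd x n (k+2)\<bar> \<le> sx x n k" for k
      using g_ge1[of "k+2"] by (simp add: sx_def mult_le_cancel_right1)
    have sD: "summable (\<lambda>k. \<bar>Dd x n (k+2)\<bar>)"
    proof (rule summable_comparison_test'[of "sx x n" 0])
      show "summable (sx x n)" using it by simp
      fix k show "norm \<bar>Dd x n (k+2)\<bar> \<le> sx x n k" using le[of k] by simp
    qed
    have ms: "mu summable_on posN" using prob_mu unfolding prob_on_posN_def by blast
    have sD': "summable (\<lambda>k. \<bar>(\<Sum>z\<in>{1..<k+2}. kernel_pow K n x z - mu z)\<bar>)"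
      unfolding De by (rule sD)
    have "tv_dist (kernel_pow K n x) mu \<le> 2 * (\<Sum>k. \<bar>(\<Sum>z\<in>{1..<k+2}. kernel_pow K n x z - mu z)\<bar>)"
      by (rule tv_bound[OF kp_summable_posN[OF x] ms sD'])
    also have "\<dots> = 2 * (\<Sum>k. \<bar>Dd x n (k+2)\<bar>)" unfolding De ..
    also have "\<dots> \<le> 2 * suminf (sx x n)"
      using suminf_le[OF le sD] it by simp
    also have "\<dots> \<le> 2 * (lam ^ n * suminf (sx x 0))" using it by simp
    also have "\<dots> \<le> 2 * (1 + suminf (sx x 0)) * lam ^ n"
      using lambda_nonneg by (simp add: algebra_simps)
    finally show "tv_dist (kernel_pow K n x) mu \<le> 2 * (1 + suminf (sx x 0)) * lam ^ n" .
  qed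
qed

end




lemma POS:
  fixes f :: "'a \<Rightarrow> real"
  assumes M: "prob_space M" and i: "integrable M f" and nn: "AE x in M. 0 \<le> f x"
    and np: "\<not> (AE x in M. \<not> P x)" and pp: "AE x in M. P x \<longrightarrow> 0 < f x"
  shows "0 < integral\<^sup>L M f"
proof -
  have "0 \<le> integral\<^sup>L M f" using nn by (rule integral_nonneg_AE)
  moreover have "integral\<^sup>L M f \<noteq> 0"
  proof
    assume "integral\<^sup>L M f = 0"
    then have "AE x in M. f x = 0" using integral_nonneg_eq_0_iff_AE[OF i nn] by simp
    with pp have "AE x in M. \<not> P x" by eventually_elim auto
    with np show False by simp
  qed
  ultimately show ?thesis by simp
qed

locale nq =
  fixes Q :: "real measure"
  assumes Q_prob: "prob_space Q" and Q_sets: "sets Q = sets borel"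
    and W_pos: "AE w in Q. 0 < w" and W_int: "integrable Q (\<lambda>w. w)"
    and W_mean: "(\<integral>w. w \<partial>Q) = 1"
begin

lemma meas: fixes f :: "real \<Rightarrow> real" assumes "f \<in> borel_measurable borel" shows "f \<in> borel_measurable Q"
  using assms by (simp add: measurable_cong_sets[OF Q_sets refl])

lemma int_const: "integrable Q (\<lambda>_. c::real)"
  using prob_space.finite_measure[OF Q_prob] by (simp add: finite_measure.integrable_const)

lemma integral_one: "(\<integral>_. (1::real) \<partial>Q) = 1"
  using prob_space.prob_space[OF Q_prob] by simp

lemma AE_False_Q: "(AE x in Q. False) \<longleftrightarrow> False"
  using prob_space.AE_False[OF Q_prob] .

definition \<phi> :: "real \<Rightarrow> real" where "\<phi> c = (\<integral>u. min 1 (c * u) \<partial>Q)"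

lemma int_min: "integrable Q (\<lambda>u. min 1 (c * u))"
proof (rule Bochner_Integration.integrable_bound)
  show "integrable Q (\<lambda>u. 1 + \<bar>c\<bar> * \<bar>u\<bar>)"
  proof -
    have "integrable Q (\<lambda>u. \<bar>c\<bar> * \<bar>u\<bar>)" by (rule Bochner_Integration.integrable_mult_right[OF Bochner_Integration.integrable_abs[OF W_int]])
    then show ?thesis by (rule Bochner_Integration.integrable_add[OF int_const])
  qed
  show "(\<lambda>u. min 1 (c * u)) \<in> borel_measurable Q" by (intro meas) measurable
  show "AE x in Q. norm (min 1 (c * x)) \<le> norm (1 + \<bar>c\<bar> * \<bar>x\<bar>)"
  proof (intro AE_I2)
    fix x :: real
    have "\<bar>c * x\<bar> = \<bar>c\<bar> * \<bar>x\<bar>" by (rule abs_mult)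
    moreover have "0 \<le> \<bar>c\<bar> * \<bar>x\<bar>" by simp
    ultimately show "norm (min 1 (c * x)) \<le> norm (1 + \<bar>c\<bar> * \<bar>x\<bar>)"
      by (cases "1 \<le> c * x") (simp_all add: min_def)
  qed
qed

lemma acc_eq: "noisy_acc Q r = (\<integral>w. \<phi> (r / w) \<partial>Q)"
  unfolding noisy_acc_def \<phi>_def by simp

lemma phi_mono: "mono \<phi>"
proof (rule monoI)
  fix c c' :: real assume cc: "c \<le> c'"
  show "\<phi> c \<le> \<phi> c'" unfolding \<phi>_def
  proof (rule integral_mono_AE[OF int_min int_min])
    show "AE x in Q. min 1 (c * x) \<le> min 1 (c' * x)"
      using W_pos
    proof eventually_elim
      case (elim x)
      have "c * x \<le> c' * x" using cc elim by (intro mult_right_mono) auto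
      then show ?case by (rule min.mono[OF order_refl])
    qed
  qed
qed

lemma phi_meas: "\<phi> \<in> borel_measurable borel"
  by (rule borel_measurable_mono[OF phi_mono])

lemma phi_nn: "0 \<le> c \<Longrightarrow> 0 \<le> \<phi> c"
  unfolding \<phi>_def by (rule integral_nonneg_AE) (use W_pos in \<open>eventually_elim, auto\<close>)

lemma phi_le1: "\<phi> c \<le> 1"
proof -
  have "\<phi> c \<le> (\<integral>_. (1::real) \<partial>Q)" unfolding \<phi>_def
    by (rule integral_mono_AE[OF int_min int_const]) auto
  then show ?thesis using integral_one by simp
qed

lemma phi_pos: "0 < c \<Longrightarrow> 0 < \<phi> c"
  unfolding \<phi>_def
proof (rule POS[OF Q_prob int_min, where P="\<lambda>u. 0 < u"])
  assume c: "0 < c"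
  show "AE x in Q. 0 \<le> min 1 (c * x)" using W_pos by eventually_elim (use c in auto)
  show "\<not> (AE x in Q. \<not> 0 < x)"
  proof
    assume "AE x in Q. \<not> 0 < x"
    with W_pos have "AE x in Q. False" by eventually_elim auto
    then show False using AE_False_Q by simp
  qed
  show "AE x in Q. 0 < x \<longrightarrow> 0 < min 1 (c * x)" using c by auto
qed

lemma int_acc: assumes r: "0 \<le> r" shows "integrable Q (\<lambda>w. \<phi> (r / w))"
proof (rule Bochner_Integration.integrable_bound[OF int_const[of 1]])
  show "(\<lambda>w. \<phi> (r / w)) \<in> borel_measurable Q"
  proof (intro meas)
    have "(\<lambda>w. r / w) \<in> borel_measurable borel" by measurable
    then show "(\<lambda>w. \<phi> (r / w)) \<in> borel_measurable borel" by (rule measurable_compose[OF _ phi_meas])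
  qed
  show "AE x in Q. norm (\<phi> (r / x)) \<le> norm (1::real)"
    using W_pos
  proof eventually_elim
    case (elim x)
    then have "0 \<le> r / x" using r by simp
    then show ?case using phi_nn[of "r/x"] phi_le1[of "r/x"] by simp
  qed
qed

lemma acc_nn: "0 \<le> r \<Longrightarrow> 0 \<le> noisy_acc Q r"
  unfolding acc_eq
  by (rule integral_nonneg_AE) (use W_pos in \<open>eventually_elim, simp add: phi_nn\<close>)

lemma acc_le1: "0 \<le> r \<Longrightarrow> noisy_acc Q r \<le> 1"
proof -
  assume r: "0 \<le> r"
  have "noisy_acc Q r \<le> (\<integral>_. (1::real) \<partial>Q)" unfolding acc_eq
    by (rule integral_mono_AE[OF int_acc[OF r] int_const]) (simp add: phi_le1)
  then show ?thesis using integral_one by simp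
qed

lemma acc_pos: assumes r: "0 < r" shows "0 < noisy_acc Q r"
  unfolding acc_eq
proof (rule POS[OF Q_prob int_acc, where P="\<lambda>u. 0 < u"])
  show "0 \<le> r" using r by simp
  show "AE x in Q. 0 \<le> \<phi> (r / x)" using W_pos by eventually_elim (use r in \<open>simp add: phi_nn\<close>)
  show "\<not> (AE x in Q. \<not> 0 < x)"
  proof
    assume "AE x in Q. \<not> 0 < x"
    with W_pos have "AE x in Q. False" by eventually_elim auto
    then show False using AE_False_Q by simp
  qed
  show "AE x in Q. 0 < x \<longrightarrow> 0 < \<phi> (r / x)" using r by (auto intro!: AE_I2 phi_pos)
qed

lemma acc_mono: assumes r: "0 \<le> r" and rs: "r \<le> s" shows "noisy_acc Q r \<le> noisy_acc Q s"
  unfolding acc_eq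
proof (rule integral_mono_AE[OF int_acc int_acc])
  show "0 \<le> r" "0 \<le> s" using r rs by auto
  show "AE x in Q. \<phi> (r / x) \<le> \<phi> (s / x)" using W_pos
  proof eventually_elim
    case (elim x)
    then have "r / x \<le> s / x" using rs by (simp add: divide_right_mono)
    then show ?case using phi_mono by (simp add: monoD)
  qed
qed

lemma W_ge1: "\<not> (AE w in Q. \<not> 1 \<le> w)"
proof
  assume A: "AE w in Q. \<not> 1 \<le> w"
  have i: "integrable Q (\<lambda>w. 1 - w)" by (rule Bochner_Integration.integrable_diff[OF int_const W_int])
  have nn: "AE w in Q. 0 \<le> 1 - w" using A by eventually_elim auto
  have "(\<integral>w. 1 - w \<partial>Q) = 0"
    using Bochner_Integration.integral_diff[OF int_const W_int, of 1] integral_one W_mean by simp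
  then have "AE w in Q. 1 - w = 0" using integral_nonneg_eq_0_iff_AE[OF i nn] by simp
  with A have "AE w in Q. False" by eventually_elim auto
  then show False using AE_False_Q by simp
qed

lemma W_le1: "\<not> (AE w in Q. \<not> w \<le> 1)"
proof
  assume A: "AE w in Q. \<not> w \<le> 1"
  have i: "integrable Q (\<lambda>w. w - 1)" by (rule Bochner_Integration.integrable_diff[OF W_int int_const])
  have nn: "AE w in Q. 0 \<le> w - 1" using A by eventually_elim auto
  have "(\<integral>w. w - 1 \<partial>Q) = 0"
    using Bochner_Integration.integral_diff[OF W_int int_const, of 1] integral_one W_mean by simp
  then have "AE w in Q. w - 1 = 0" using integral_nonneg_eq_0_iff_AE[OF i nn] by simp
  with A have "AE w in Q. False" by eventually_elim auto
  then show False using AE_False_Q by simp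
qed

lemma phi_strict: assumes r: "1 < r" and w: "1 \<le> w" shows "\<phi> (1 / r / w) < \<phi> (r / w)"
proof -
  define c where "c = r / w"
  define c' where "c' = 1 / r / w"
  have "0 < \<phi> c - \<phi> c'"
  proof -
    have "\<phi> c - \<phi> c' = (\<integral>u. min 1 (c * u) - min 1 (c' * u) \<partial>Q)"
      unfolding \<phi>_def by (rule Bochner_Integration.integral_diff[OF int_min int_min, symmetric])
    also have "0 < \<dots>"
    proof (rule POS[OF Q_prob Bochner_Integration.integrable_diff[OF int_min int_min], where P="\<lambda>u. u \<le> 1"])
      show "\<not> (AE x in Q. \<not> x \<le> 1)" by (rule W_le1)
      have rr: "1 * 1 \<le> r * r" using r by (intro mult_mono) auto
      have cc: "c' \<le> c" using r w rr by (simp add: c_def c'_def divide_right_mono field_simps)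
      show "AE x in Q. 0 \<le> min 1 (c * x) - min 1 (c' * x)" using W_pos
      proof eventually_elim
        case (elim x)
        have "c' * x \<le> c * x" using cc elim by (intro mult_right_mono) auto
        then show ?case by (simp add: min_def)
      qed
      show "AE x in Q. x \<le> 1 \<longrightarrow> 0 < min 1 (c * x) - min 1 (c' * x)" using W_pos
      proof eventually_elim
        case (elim x)
        show ?case
        proof
          assume x1: "x \<le> 1"
          have "c' * x = x / (r * w)" by (simp add: c'_def)
          also have "\<dots> \<le> 1 / (r * w)" using x1 r w by (intro divide_right_mono) auto
          also have "\<dots> < 1" using r w by (simp add: field_simps) (smt (verit) mult_le_cancel_left1)
          finally have a: "c' * x < 1" .
          have rr2: "1 * 1 < r * r" using r by (intro mult_strict_mono) auto
          have "c' < c" using r w rr2 by (simp add: c_def c'_def field_simps)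
          then have b: "c' * x < c * x" using elim by (intro mult_strict_right_mono) auto
          show "0 < min 1 (c * x) - min 1 (c' * x)" using a b by (simp add: min_def)
        qed
      qed
    qed
    finally show ?thesis .
  qed
  then show ?thesis by (simp add: c_def c'_def)
qed

lemma acc_strict: assumes r: "1 < r" shows "noisy_acc Q (1 / r) < noisy_acc Q r"
proof -
  have r0: "0 \<le> r" "0 \<le> 1 / r" using r by auto
  have "0 < (\<integral>w. \<phi> (r / w) - \<phi> (1 / r / w) \<partial>Q)"
  proof (rule POS[OF Q_prob Bochner_Integration.integrable_diff[OF int_acc int_acc], where P="\<lambda>w. 1 \<le> w"])
    show "0 \<le> r" "0 \<le> 1 / r" using r0 by auto
    show "\<not> (AE x in Q. \<not> 1 \<le> x)" by (rule W_ge1)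
    show "AE x in Q. 0 \<le> \<phi> (r / x) - \<phi> (1 / r / x)" using W_pos
    proof eventually_elim
      case (elim x)
      have rr: "1 * 1 \<le> r * r" using r by (intro mult_mono) auto
      have "1 / r / x \<le> r / x" using r elim rr by (intro divide_right_mono) (auto simp: field_simps)
      then show ?case using phi_mono by (simp add: monoD)
    qed
    show "AE x in Q. 1 \<le> x \<longrightarrow> 0 < \<phi> (r / x) - \<phi> (1 / r / x)"
      using phi_strict[OF r] by auto
  qed
  also have "\<dots> = noisy_acc Q r - noisy_acc Q (1 / r)"
    unfolding acc_eq by (rule Bochner_Integration.integral_diff[OF int_acc int_acc]) (use r0 in auto)
  finally show ?thesis by simp
qed

end


lemma exp_ratio: "exp (- (a::real)) * (1/2) / (exp (- b) * (1/2)) = exp (b - a)"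
  by (simp add: exp_diff exp_minus field_simps)

theorem proposition2p1:
  fixes h :: "nat \<Rightarrow> real" and Q :: "real measure"
  assumes convex: "\<forall>m\<ge>2. 2 * h m \<le> h (m - 1) + h (m + 1)"
    and normalisable: "(\<lambda>m. exp (- h m)) summable_on posN"
    and Q_prob: "prob_space Q" and Q_sets: "sets Q = sets borel"
    and W_pos: "AE w in Q. 0 < w"
    and W_int: "integrable Q (\<lambda>w. w)"
    and W_mean: "(\<integral>w. w \<partial>Q) = 1"
  shows "geom_ergodic (noisy_kernel h Q)"
proof -
  interpret nq Q by (rule nq.intro[OF Q_prob Q_sets W_pos W_int W_mean])
  define a where "a = noisy_acc Q"
  define u where "u m = noisy_move h Q m (m+1)" for m
  define d where "d m = noisy_move h Q m (m-1)" for m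
  define Zh where "Zh = (\<Sum>\<^sub>\<infinity>k\<in>posN. exp (- h k))"
  have "sum (\<lambda>m. exp (- h m)) {1} \<le> Zh"
    unfolding Zh_def by (rule finite_sum_le_infsum[OF normalisable]) auto
  then have Zh_pos: "0 < Zh" using exp_gt_zero[of "- h 1"] by (simp del: exp_gt_zero)
  have move: "noisy_move h Q m y = 1/2 * a (exp (h m - h y))" if "1 \<le> m" "1 \<le> y" for m y
  proof -
    have "target h y * (1/2) / (target h m * (1/2)) = exp (- h y) * (1/2) / (exp (- h m) * (1/2))"
      using that Zh_pos by (simp add: target_def Zh_def)
    also have "\<dots> = exp (h m - h y)" by (rule exp_ratio)
    finally show ?thesis using that by (simp add: noisy_move_def a_def)
  qed
  define \<delta> where "\<delta> m = h (m+1) - h m" for m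
  have u_eq: "u m = 1/2 * a (exp (- \<delta> m))" if "1 \<le> m" for m
    using move[of m "m+1"] that by (simp add: u_def \<delta>_def)
  have d_eq: "d m = 1/2 * a (exp (\<delta> (m-1)))" if "2 \<le> m" for m
  proof -
    have "d m = 1/2 * a (exp (h m - h (m-1)))" using move[of m "m-1"] that by (simp add: d_def)
    moreover have "m - 1 + 1 = m" using that by simp
    ultimately show ?thesis by (simp add: \<delta>_def)
  qed
  have d1: "d 1 = 0" by (simp add: d_def noisy_move_def posN_def)
  have dmono1: "\<delta> m \<le> \<delta> (m+1)" if "1 \<le> m" for m
  proof -
    have "2 \<le> m+1" using that by simp
    then have "2 * h (m+1) \<le> h (m+1-1) + h (m+1+1)" using convex by blast
    then show ?thesis by (simp add: \<delta>_def)
  qed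
  have dmono: "\<delta> m \<le> \<delta> n" if "1 \<le> m" "m \<le> n" for m n
    using that(2,1)
  proof (induction n rule: dec_induct)
    case (step n) then show ?case using dmono1[of n] by simp
  qed simp
  have a_pos: "0 < a r" if "0 < r" for r using acc_pos that by (simp add: a_def)
  have a_le: "a r \<le> 1" if "0 \<le> r" for r using acc_le1 that by (simp add: a_def)
  have a_mono: "a r \<le> a s" if "0 \<le> r" "r \<le> s" for r s using acc_mono that by (simp add: a_def)
  obtain m0 where m0: "1 \<le> m0" "0 < \<delta> m0"
  proof (rule ccontr)
    assume "\<not> thesis"
    with that have nd: "\<delta> m \<le> 0" if "1 \<le> m" for m using that by fastforce
    have hle: "h m \<le> h 1" if "1 \<le> m" for m
      using that
    proof (induction m rule: dec_induct)
      case (step n) then show ?case using nd[of n] by (simp add: \<delta>_def)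
    qed simp
    define e where "e = exp (- h 1)"
    have e: "0 < e" by (simp add: e_def)
    define N where "N = nat (ceiling (Zh / e)) + 1"
    have "sum (\<lambda>m. exp (- h m)) {1..N} \<le> Zh"
      unfolding Zh_def by (rule finite_sum_le_infsum[OF normalisable]) (auto simp: posN_def)
    moreover have "real N * e \<le> sum (\<lambda>m. exp (- h m)) {1..N}"
    proof -
      have "sum (\<lambda>m. e) {1..N} \<le> sum (\<lambda>m. exp (- h m)) {1..N}"
        by (rule sum_mono) (use hle in \<open>auto simp: e_def\<close>)
      then show ?thesis by simp
    qed
    moreover have "Zh < real N * e"
    proof -
      have "Zh / e < real N" unfolding N_def by linarith
      then show ?thesis using e by (simp add: divide_less_eq)
    qed
    ultimately show False by simp
  qed
  define ds where "ds = \<delta> m0"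
  have ds: "0 < ds" using m0 by (simp add: ds_def)
  define L where "L = a (exp ds) / a (exp (- ds))"
  have ap: "0 < a (exp (- ds))" by (rule a_pos) simp
  have L1: "1 < L"
  proof -
    have "a (1 / exp ds) < a (exp ds)" unfolding a_def by (rule acc_strict) (use ds in simp)
    then show ?thesis using ap by (simp add: L_def exp_minus divide_simps)
  qed
  define y0 where "y0 = max 3 (m0 + 2)"
  interpret B: bd "noisy_kernel h Q" u d L y0
  proof
    show "bdK (noisy_kernel h Q) u d"
      unfolding bdK_def noisy_kernel_def u_def d_def by auto
    show "\<And>m. 1 \<le> m \<Longrightarrow> 0 < u m"
    proof -
      fix m :: nat assume m: "1 \<le> m" show "0 < u m" using u_eq[OF m] a_pos[of "exp (- \<delta> m)"] by simp
    qed
    show "\<And>m. 1 \<le> m \<Longrightarrow> u m \<le> 1/2"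
    proof -
      fix m :: nat assume m: "1 \<le> m" show "u m \<le> 1/2" using u_eq[OF m] a_le[of "exp (- \<delta> m)"] by simp
    qed
    show "d 1 = 0" by (rule d1)
    show "\<And>m. 2 \<le> m \<Longrightarrow> 0 < d m"
    proof -
      fix m :: nat assume m: "2 \<le> m" show "0 < d m" using d_eq[OF m] a_pos[of "exp (\<delta> (m-1))"] by simp
    qed
    show "\<And>m. 2 \<le> m \<Longrightarrow> d m \<le> 1/2"
    proof -
      fix m :: nat assume m: "2 \<le> m" show "d m \<le> 1/2" using d_eq[OF m] a_le[of "exp (\<delta> (m-1))"] by simp
    qed
    show "\<And>m. 1 \<le> m \<Longrightarrow> u (m+1) \<le> u m"
    proof -
      fix m :: nat assume m: "1 \<le> m"
      have "a (exp (- \<delta> (m+1))) \<le> a (exp (- \<delta> m))"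
        by (rule a_mono) (use dmono1[OF m] in auto)
      then show "u (m+1) \<le> u m" using u_eq[of m] u_eq[of "m+1"] m by simp
    qed
    show "\<And>m. 2 \<le> m \<Longrightarrow> d m \<le> d (m+1)"
    proof -
      fix m :: nat assume m: "2 \<le> m"
      have "a (exp (\<delta> (m-1))) \<le> a (exp (\<delta> m))"
        by (rule a_mono) (use dmono[of "m-1" m] m in auto)
      then show "d m \<le> d (m+1)" using d_eq[of m] d_eq[of "m+1"] m by simp
    qed
    show "1 < L" by (rule L1)
    show "3 \<le> y0" by (simp add: y0_def)
    show "\<And>y. y0 \<le> y \<Longrightarrow> L * u y \<le> d (y-1)"
    proof -
      fix y assume y: "y0 \<le> y"
      then have y2: "m0 + 2 \<le> y" "3 \<le> y" by (auto simp: y0_def)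
      have "u y = 1/2 * a (exp (- \<delta> y))" using u_eq y2 by simp
      also have "\<dots> \<le> 1/2 * a (exp (- ds))"
        using dmono[of m0 y] m0 y2 by (simp add: a_mono ds_def)
      finally have "L * u y \<le> L * (1/2 * a (exp (- ds)))" using L1 by simp
      also have "\<dots> = 1/2 * a (exp ds)" using ap by (simp add: L_def)
      also have "\<dots> \<le> 1/2 * a (exp (\<delta> (y-1-1)))"
        using dmono[of m0 "y-1-1"] m0 y2 by (simp add: a_mono ds_def)
      also have "\<dots> = d (y-1)" using d_eq[of "y-1"] y2 by simp
      finally show "L * u y \<le> d (y-1)" .
    qed
  qed
  show ?thesis by (rule B.geom)
qed

end
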